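(* Suppose the cost norm is $\|\cdot\|=\|\cdot\|_2$ and the Margin assumption holds. Let $\{y_t\}_{t\ge1}$ be generated by the gradient-based SMM algorithm with any positive stepsizes $\{\gamma_t\}$ (with the initialization terminating). Then $y_*^\top v(y_t)\ge0$ for all $t\ge1$ (equivalently $y_*^\top y_t\ge0$).
   Context: Setting: $\mathcal{A}\subseteq\mathbb{R}^d$, labels $\ell(A)\in\{\pm1\}$; $\operatorname{sign}(0)=+1$; cost constant $c>0$; norm $\|\cdot\|=\|\cdot\|_2$ (self-dual), $v(y)=y/\|y\|_2$ for $y\ne0$, $v(0)=0$. Predicted label $\hat\ell(x,y,b)=\operatorname{sign}(y^\top x+b-2\|y\|_2/c)$. Response: for $y\ne0$, $r(A,y,b)=A+(\tfrac2c-\tfrac{y^\top A+b}{\|y\|_2})v(y)$ if $0\le\tfrac{y^\top A+b}{\|y\|_2}<\tfrac2c$, else $A$. Proxy: for $y\ne0$, $s(A,y,b)=A-\tfrac{y^\top A+b}{\|y\|_2}v(y)$ if $0\le\tfrac{y^\top A+b}{\|y\|_2}<\tfrac2c$ and $\ell(A)=-1$; $=A+(\tfrac2c-\tfrac{y^\top A+b}{\|y\|_2})v(y)$ if the range condition holds and $\ell(A)=+1$; $=A$ otherwise; $r(A,0,b)=s(A,0,b)=A$. Margin function $h(y,b;\widetilde{\mathcal{A}}^+,\widetilde{\mathcal{A}}^-)=\min\{\min_{x\in\widetilde{\mathcal{A}}^+}(y^\top x+b),\min_{x\in\widetilde{\mathcal{A}}^-}(-y^\top x-b)\}$. Margin assumption: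 $d_*:=\max_{y\ne0,b}\min_{A\in\mathcal{A}}\ell(A)\frac{y^\top A+b}{\|y\|_2}$ attained at some $(y_*,b_* )$, $y_*\ne0$, $d_*>0$. Gradient-based SMM algorithm: initialization as follows: $\widetilde{\mathcal{A}}_0^\pm=\emptyset$, $(y,b)=(0,1)$; each arriving agent (responding with its true $A$) is added to $\widetilde{\mathcal{A}}_0^+$ or $\widetilde{\mathcal{A}}_0^-$ by label; then $b:=-1$ if $\widetilde{\mathcal{A}}_0^+=\emptyset$, else $b:=+1$ if $\widetilde{\mathcal{A}}_0^-=\emptyset$; stop when both nonempty; $(y_1,b_1)$ is an optimal solution of $\max\{h(y,b;\widetilde{\mathcal{A}}_0^+,\widetilde{\mathcal{A}}_0^-):\|y\|_2\le1,b\in\mathbb{R}\}$; set $z_1=y_1$. For $t\ge1$: agent $A_t\in\mathcal{A}$ is shown $(y_t,b_t)$, responds $r(A_t,y_t,b_t)$, is predicted $\hat\ell(r(A_t,y_t,b_t),y_t,b_t)$; $s(A_t,y_t,b_t)$ is appended to $\widetilde{\mathcal{A}}_{t-1}^+$ if $\ell(A_t)=+1$, else to $\widetilde{\mathcal{A}}_{t-1}^-$, giving $\widetilde{\mathcal{A}}_t^\pm$; choose $s_t^+\in\arg\min_{x\in\widetilde{\mathcal{A}}_t^+}z_t^\top x$, $s_t^-\in\arg\max_{x\in\widetilde{\mathcal{A}}_t^-}z_t^\top x$; set $z_{t+1}=\Pi_{B}(z_t+\gamma_t(s_t^+-s_t^-))$ where $\Pi_B$ is Euclidean projection onto the unit $\ell_2$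 ball; $y_{t+1}=\frac{\sum_{\tau=1}^{t+1}\gamma_\tau z_\tau}{\sum_{\tau=1}^{t+1}\gamma_\tau}$ and $b_{t+1}=-\tfrac12\big(\min_{x\in\widetilde{\mathcal{A}}_t^+}y_{t+1}^\top x+\max_{x\in\widetilde{\mathcal{A}}_t^-}y_{t+1}^\top x\big)$. *)

theory Defs
  imports "HOL-Analysis.Analysis"
begin

definition vdir :: "'a::euclidean_space \<Rightarrow> 'a" where
  "vdir y = (if y = 0 then 0 else (1 / norm y) *\<^sub>R y)"

definition resp :: "real \<Rightarrow> 'a::euclidean_space \<Rightarrow> 'a \<Rightarrow> real \<Rightarrow> 'a" where
  "resp c A y b =
     (if y = 0 then A
      else (let q = (y \<bullet> A + b) / norm y in
            if 0 \<le> q \<and> q < 2 / c then A + (2 / c - q) *\<^sub>R vdir y else A))"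

definition proxy :: "real \<Rightarrow> ('a \<Rightarrow> real) \<Rightarrow> 'a::euclidean_space \<Rightarrow> 'a \<Rightarrow> real \<Rightarrow> 'a" where
  "proxy c l A y b =
     (if y = 0 then A
      else (let q = (y \<bullet> A + b) / norm y in
            if 0 \<le> q \<and> q < 2 / c \<and> l A = -1 then A - q *\<^sub>R vdir y
            else if 0 \<le> q \<and> q < 2 / c \<and> l A = 1 then A + (2 / c - q) *\<^sub>R vdir y
            else A))"

definition hmarg :: "'a::euclidean_space \<Rightarrow> real \<Rightarrow> 'a set \<Rightarrow> 'a set \<Rightarrow> real" where
  "hmarg y b P N = min (Min ((\<lambda>x. y \<bullet> x + b) ` P)) (Min ((\<lambda>x. - (y \<bullet> x) - b) ` N))"

definition margin_lb :: "'a::euclidean_space set \<Rightarrow> ('a \<Rightarrow> real) \<Rightarrow> 'a \<Rightarrow> real \<Rightarrow> real \<Rightarrow> bool" where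
  "margin_lb AS l y b e \<longleftrightarrow> (\<forall>A\<in>AS. e \<le> l A * (y \<bullet> A + b) / norm y)"

text \<open>Margin assumption: d = max over (y \<noteq> 0, b) of inf over A of the signed distance,
  attained at (ys, bs), and d > 0.\<close>
definition margin_assumption :: "'a::euclidean_space set \<Rightarrow> ('a \<Rightarrow> real) \<Rightarrow> 'a \<Rightarrow> real \<Rightarrow> real \<Rightarrow> bool" where
  "margin_assumption AS l ys bs d \<longleftrightarrow>
     ys \<noteq> 0 \<and> d > 0 \<and> margin_lb AS l ys bs d \<and>
     (\<forall>y b e. y \<noteq> 0 \<longrightarrow> margin_lb AS l y b e \<longrightarrow> e \<le> d)"

end

theory Submission
  imports Defs
begin


lemma proj_ball:
  fixes w :: "'a::euclidean_space"
  shows "closest_point (cball 0 1) w = (if norm w \<le> 1 then w else (1 / norm w) *\<^sub>R w)"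
proof (cases "norm w \<le> 1")
  case True then show ?thesis by (simp add: closest_point_self)
next
  case False
  hence np: "norm w > 1" by simp
  have "(1 / norm w) *\<^sub>R w = closest_point (cball 0 1) w"
  proof (rule closest_point_unique)
    show "(1 / norm w) *\<^sub>R w \<in> cball 0 1" using np by simp
    show "\<forall>z\<in>cball 0 1. dist w ((1 / norm w) *\<^sub>R w) \<le> dist w z"
    proof
      fix z :: 'a assume "z \<in> cball 0 1"
      hence nz: "norm z \<le> 1" by simp
      have eq: "w - (1 / norm w) *\<^sub>R w = (1 - 1 / norm w) *\<^sub>R w" by (simp add: algebra_simps)
      have ge: "1 - 1 / norm w \<ge> 0" using np by (simp add: divide_le_eq_1)
      have "dist w ((1 / norm w) *\<^sub>R w) = norm ((1 - 1 / norm w) *\<^sub>R w)"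
        unfolding dist_norm eq ..
      also have "\<dots> = (1 - 1/norm w) * norm w"
        unfolding norm_scaleR abs_of_nonneg[OF ge] ..
      finally have "dist w ((1 / norm w) *\<^sub>R w) = (1 - 1/norm w) * norm w" .
      also have "\<dots> = norm w - 1"
      proof -
        have nw: "norm w \<noteq> 0" using np by linarith
        have "1 / norm w * norm w = 1" using nw by (metis divide_self_if times_divide_eq_left mult_1)
        thus ?thesis by (simp add: left_diff_distrib)
      qed
      also have "\<dots> \<le> norm w - norm z" using nz by simp
      also have "\<dots> \<le> dist w z" by (simp add: dist_norm norm_triangle_ineq2)
      finally show "dist w ((1 / norm w) *\<^sub>R w) \<le> dist w z" .
    qed
  qed auto
  then show ?thesis using False by simp
qed

lemma hm_ge:
  assumes "finite P" "P \<noteq> {}" "finite N" "N \<noteq> {}"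
    "\<forall>x\<in>P. e \<le> y \<bullet> x + b" "\<forall>x\<in>N. e \<le> - (y \<bullet> x) - b"
  shows "e \<le> hmarg y b P N"
  using assms unfolding hmarg_def by (simp add: Min_ge_iff)

lemma hm_leP:
  assumes "finite P" "finite N" "x \<in> P"
  shows "hmarg y b P N \<le> y \<bullet> x + b"
  using assms unfolding hmarg_def by (simp add: min.coboundedI1)

lemma hm_leN:
  assumes "finite P" "finite N" "x \<in> N"
  shows "hmarg y b P N \<le> - (y \<bullet> x) - b"
  using assms unfolding hmarg_def by (simp add: min.coboundedI2)



lemma base_lemma:
  fixes P N :: "'a::euclidean_space set"
  assumes fP: "finite P" "P \<noteq> {}" and fN: "finite N" "N \<noteq> {}"
    and ys0: "ys \<noteq> 0" and dpos: "d > 0"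
    and Pm: "\<forall>x\<in>P. d \<le> (ys \<bullet> x + bs) / norm ys"
    and Nm: "\<forall>x\<in>N. d \<le> - (ys \<bullet> x + bs) / norm ys"
    and y1n: "norm y1 \<le> 1"
    and opt: "\<forall>y' b'. norm y' \<le> 1 \<longrightarrow> hmarg y' b' P N \<le> hmarg y1 b1 P N"
  shows "ys \<bullet> y1 \<ge> 0"
proof (rule ccontr)
  assume neg: "\<not> ys \<bullet> y1 \<ge> 0"
  define u where "u = (1 / norm ys) *\<^sub>R ys"
  define \<beta> where "\<beta> = bs / norm ys"
  have nys: "norm ys > 0" using ys0 by simp
  have nu: "norm u = 1" using ys0 by (simp add: u_def)
  have uP: "\<forall>x\<in>P. d \<le> u \<bullet> x + \<beta>" using Pm by (simp add: u_def \<beta>_def add_divide_distrib)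
  have uN: "\<forall>x\<in>N. d \<le> - (u \<bullet> x) - \<beta>" using Nm by (simp add: u_def \<beta>_def diff_divide_distrib)
  define m where "m = hmarg y1 b1 P N"
  have "d \<le> hmarg u \<beta> P N" using hm_ge[OF fP fN uP uN] .
  also have "\<dots> \<le> m" using opt nu by (simp add: m_def)
  finally have dm: "d \<le> m" .
  have mpos: "m > 0" using dm dpos by simp
  have a0: "u \<bullet> y1 < 0" using neg nys by (simp add: u_def divide_less_0_iff)
  define lam where "lam = d / (d + m)"
  have l0: "0 < lam" "lam < 1" using dpos mpos by (auto simp: lam_def field_simps)
  define y' where "y' = (1 - lam) *\<^sub>R y1 + lam *\<^sub>R u"
  define b' where "b' = (1 - lam) * b1 + lam * \<beta>"
  define f where "f = (1 - lam) * m + lam * d"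
  have fpos: "f > 0" using l0 mpos dpos by (simp add: f_def add_pos_pos)
  have y'P: "\<forall>x\<in>P. f \<le> y' \<bullet> x + b'"
  proof
    fix x assume x: "x \<in> P"
    have "m \<le> y1 \<bullet> x + b1" using hm_leP[OF fP(1) fN(1) x] by (simp add: m_def)
    hence 1: "(1-lam) * m \<le> (1-lam) * (y1 \<bullet> x + b1)" using l0 by (simp add: mult_left_mono)
    have 2: "lam * d \<le> lam * (u \<bullet> x + \<beta>)" using uP x l0 by (simp add: mult_left_mono)
    have "y' \<bullet> x + b' = (1-lam) * (y1 \<bullet> x + b1) + lam * (u \<bullet> x + \<beta>)"
      by (simp add: y'_def b'_def inner_add_left algebra_simps)
    then show "f \<le> y' \<bullet> x + b'" using 1 2 by (simp add: f_def)
  qed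
  have y'N: "\<forall>x\<in>N. f \<le> - (y' \<bullet> x) - b'"
  proof
    fix x assume x: "x \<in> N"
    have "m \<le> - (y1 \<bullet> x) - b1" using hm_leN[OF fP(1) fN(1) x] by (simp add: m_def)
    hence 1: "(1-lam) * m \<le> (1-lam) * (- (y1 \<bullet> x) - b1)" using l0 by (simp add: mult_left_mono)
    have 2: "lam * d \<le> lam * (- (u \<bullet> x) - \<beta>)" using uN x l0 by (simp add: mult_left_mono)
    have "- (y' \<bullet> x) - b' = (1-lam) * (- (y1 \<bullet> x) - b1) + lam * (- (u \<bullet> x) - \<beta>)"
      by (simp add: y'_def b'_def inner_add_left algebra_simps)
    then show "f \<le> - (y' \<bullet> x) - b'" using 1 2 by (simp add: f_def)
  qed
  have ny2: "(norm y')^2 \<le> (1-lam)^2 + lam^2"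
  proof -
    have "(norm y')^2 = y' \<bullet> y'" by (simp add: power2_norm_eq_inner)
    also have "\<dots> = (1-lam)^2 * (y1 \<bullet> y1) + lam^2 * (u \<bullet> u) + 2 * ((1-lam) * lam) * (u \<bullet> y1)"
      using inner_commute[of y1 u] by (simp add: y'_def inner_add_left inner_add_right power2_eq_square algebra_simps)
    also have "\<dots> = (1-lam)^2 * (norm y1)^2 + lam^2 * (norm u)^2 + 2 * ((1-lam) * lam) * (u \<bullet> y1)"
      by (simp add: power2_norm_eq_inner)
    finally have "(norm y')^2 = (1-lam)^2 * (norm y1)^2 + lam^2 * (norm u)^2 + 2 * ((1-lam) * lam) * (u \<bullet> y1)" .
    moreover have "(norm y1)^2 \<le> 1" using y1n by (simp add: power_le_one)
    moreover have "((1-lam) * lam) * (u \<bullet> y1) \<le> 0" using l0 a0 by (simp add: mult_nonneg_nonpos)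
    moreover have "(1-lam)^2 * (norm y1)^2 \<le> (1-lam)^2" using \<open>(norm y1)^2 \<le> 1\<close>
      using mult_left_mono[of "(norm y1)^2" 1 "(1-lam)^2"] by simp
    ultimately show ?thesis using nu by simp
  qed
  have key: "m^2 * ((1-lam)^2 + lam^2) < f^2"
  proof -
    have e1: "1 - lam = m / (d+m)" using dpos mpos by (simp add: lam_def field_simps)
    have e2a: "f = m/(d+m)*m + d/(d+m)*d" unfolding f_def e1 unfolding lam_def by simp
    have e2: "f = (m^2 + d^2) / (d+m)" unfolding e2a by (simp add: add_divide_distrib power2_eq_square)
    have "m^2 * ((1-lam)^2 + lam^2) = m^2 * (m^2 + d^2) / (d+m)^2"
      unfolding e1 unfolding lam_def by (simp add: power_divide add_divide_distrib[symmetric])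
    also have "\<dots> < (m^2 + d^2) * (m^2 + d^2) / (d+m)^2"
      using dpos mpos by (intro divide_strict_right_mono mult_strict_right_mono) (auto simp: add_pos_pos)
    also have "\<dots> = f^2" by (simp add: e2 power2_eq_square)
    finally show ?thesis .
  qed
  have "(m * norm y')^2 < f^2"
  proof -
    have "(m * norm y')^2 = m^2 * (norm y')^2" by (simp add: power_mult_distrib)
    also have "\<dots> \<le> m^2 * ((1-lam)^2 + lam^2)" using ny2 by (simp add: mult_left_mono)
    finally show ?thesis using key by simp
  qed
  hence fm: "m * norm y' < f" using fpos mpos
    by (meson abs_le_square_iff linorder_not_le norm_ge_zero abs_of_nonneg mult_nonneg_nonneg less_imp_le power2_less_imp_less)
  show False
  proof (cases "y' = 0")
    case True
    obtain p where p: "p \<in> P" using fP by auto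
    obtain n where n: "n \<in> N" using fN by auto
    show False using y'P p y'N n True fpos by force
  next
    case False
    hence ny: "norm y' > 0" by simp
    define k where "k = 1 / norm y'"
    have kpos: "k > 0" using ny by (simp add: k_def)
    have P2: "\<forall>x\<in>P. k * f \<le> (k *\<^sub>R y') \<bullet> x + k * b'"
      using y'P kpos by (simp add: mult_left_mono distrib_left[symmetric])
    have N2: "\<forall>x\<in>N. k * f \<le> - ((k *\<^sub>R y') \<bullet> x) - k * b'"
    proof
      fix x assume "x \<in> N"
      hence "k * f \<le> k * (- (y' \<bullet> x) - b')" using y'N kpos by (simp add: mult_left_mono)
      thus "k * f \<le> - ((k *\<^sub>R y') \<bullet> x) - k * b'" by (simp add: algebra_simps)
    qed
    have "k * f \<le> hmarg (k *\<^sub>R y') (k * b') P N" using hm_ge[OF fP fN P2 N2] .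
    also have "\<dots> \<le> m" using opt ny by (simp add: m_def k_def)
    finally have "k * f \<le> m" .
    hence "f \<le> m * norm y'" using ny by (simp add: k_def field_simps)
    thus False using fm by simp
  qed
qed

theorem mainTheorem12:
  fixes AS :: "'a::euclidean_space set" and l :: "'a \<Rightarrow> real" and c :: real
    and ys :: 'a and bs :: real and d :: real
    and init :: "'a list"
    and Ag :: "nat \<Rightarrow> 'a" and \<gamma> :: "nat \<Rightarrow> real"
    and y z sp sm :: "nat \<Rightarrow> 'a" and b :: "nat \<Rightarrow> real"
    and P N :: "nat \<Rightarrow> 'a set"
  assumes labels: "\<forall>A\<in>AS. l A = 1 \<or> l A = -1"
    and cpos: "c > 0"
    and margin: "margin_assumption AS l ys bs d"
    \<comment> \<open>initialization: agents arrive until both labels have been seen\<close>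
    and init_in: "set init \<subseteq> AS"
    and init_pos: "\<exists>A\<in>set init. l A = 1"
    and init_neg: "\<exists>A\<in>set init. l A = -1"
    and init_stop: "\<not> ((\<exists>A\<in>set (butlast init). l A = 1) \<and> (\<exists>A\<in>set (butlast init). l A = -1))"
    and P0: "P 0 = {A \<in> set init. l A = 1}"
    and N0: "N 0 = {A \<in> set init. l A = -1}"
    and y1_norm: "norm (y 1) \<le> 1"
    and y1_opt: "\<forall>y' b'. norm y' \<le> 1 \<longrightarrow> hmarg y' b' (P 0) (N 0) \<le> hmarg (y 1) (b 1) (P 0) (N 0)"
    and z1: "z 1 = y 1"
    \<comment> \<open>iterations t \<ge> 1\<close>
    and gamma_pos: "\<forall>t\<ge>1. \<gamma> t > 0"
    and agents: "\<forall>t\<ge>1. Ag t \<in> AS"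
    and Pstep: "\<forall>t\<ge>1. P t = (if l (Ag t) = 1 then insert (proxy c l (Ag t) (y t) (b t)) (P (t - 1)) else P (t - 1))"
    and Nstep: "\<forall>t\<ge>1. N t = (if l (Ag t) = 1 then N (t - 1) else insert (proxy c l (Ag t) (y t) (b t)) (N (t - 1)))"
    and sp_def: "\<forall>t\<ge>1. sp t \<in> P t \<and> (\<forall>x\<in>P t. z t \<bullet> sp t \<le> z t \<bullet> x)"
    and sm_def: "\<forall>t\<ge>1. sm t \<in> N t \<and> (\<forall>x\<in>N t. z t \<bullet> x \<le> z t \<bullet> sm t)"
    and zstep: "\<forall>t\<ge>1. z (Suc t) = closest_point (cball 0 1) (z t + \<gamma> t *\<^sub>R (sp t - sm t))"
    and ystep: "\<forall>t\<ge>1. y (Suc t) = (1 / (\<Sum>\<tau>=1..Suc t. \<gamma> \<tau>)) *\<^sub>R (\<Sum>\<tau>=1..Suc t. \<gamma> \<tau> *\<^sub>R z \<tau>)"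
    and bstep: "\<forall>t\<ge>1. b (Suc t) = - (Min ((\<lambda>x. y (Suc t) \<bullet> x) ` P t) + Max ((\<lambda>x. y (Suc t) \<bullet> x) ` N t)) / 2"
  shows "\<forall>t\<ge>1. ys \<bullet> vdir (y t) \<ge> 0"
proof -
  have ys0: "ys \<noteq> 0" and dpos: "d > 0" and mlb: "margin_lb AS l ys bs d"
    using margin by (auto simp: margin_assumption_def)
  have nys: "norm ys > 0" using ys0 by simp
  have posA: "ys \<bullet> A + bs \<ge> 0" if "A \<in> AS" "l A = 1" for A
  proof -
    have "d \<le> l A * (ys \<bullet> A + bs) / norm ys" using mlb that(1) unfolding margin_lb_def by blast
    hence "d \<le> (ys \<bullet> A + bs) / norm ys" using that(2) by simp
    hence "0 \<le> (ys \<bullet> A + bs) / norm ys" using dpos by simp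
    thus ?thesis using nys by (simp add: zero_le_divide_iff)
  qed
  have negA: "ys \<bullet> A + bs \<le> 0" if "A \<in> AS" "l A = -1" for A
  proof -
    have "d \<le> l A * (ys \<bullet> A + bs) / norm ys" using mlb that(1) unfolding margin_lb_def by blast
    hence "d \<le> - (ys \<bullet> A + bs) / norm ys" using that(2) by simp
    hence "0 \<le> - (ys \<bullet> A + bs) / norm ys" using dpos by simp
    thus ?thesis using nys by (simp add: zero_le_divide_iff)
  qed
  have fin0: "finite (P 0)" "P 0 \<noteq> {}" "finite (N 0)" "N 0 \<noteq> {}"
    using P0 N0 init_pos init_neg by auto
  have z1pos: "ys \<bullet> z 1 \<ge> 0"
  proof -
    have "ys \<bullet> y 1 \<ge> 0"
    proof (rule base_lemma[OF fin0 ys0 dpos _ _ y1_norm y1_opt])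
      show "\<forall>x\<in>P 0. d \<le> (ys \<bullet> x + bs) / norm ys"
      proof
        fix x assume "x \<in> P 0"
        hence "x \<in> AS" "l x = 1" using P0 init_in by auto
        thus "d \<le> (ys \<bullet> x + bs) / norm ys" using mlb by (auto simp: margin_lb_def)
      qed
      show "\<forall>x\<in>N 0. d \<le> - (ys \<bullet> x + bs) / norm ys"
      proof
        fix x assume "x \<in> N 0"
        hence "x \<in> AS" "l x = -1" using N0 init_in by auto
        thus "d \<le> - (ys \<bullet> x + bs) / norm ys" using mlb by (auto simp: margin_lb_def)
      qed
    qed
    thus ?thesis using z1 by simp
  qed
  have yz: "ys \<bullet> y t \<ge> 0" if "t \<ge> 1" "\<forall>\<tau>. 1 \<le> \<tau> \<and> \<tau> \<le> t \<longrightarrow> ys \<bullet> z \<tau> \<ge> 0" for t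
  proof (cases "t = 1")
    case True thus ?thesis using that z1 by auto
  next
    case False
    define s where "s = t - 1"
    have s: "t = Suc s" "s \<ge> 1" using that(1) False by (auto simp: s_def)
    have S: "(\<Sum>\<tau>=1..Suc s. \<gamma> \<tau>) > 0"
      by (rule sum_pos) (use gamma_pos in auto)
    have "ys \<bullet> (\<Sum>\<tau>=1..Suc s. \<gamma> \<tau> *\<^sub>R z \<tau>) = (\<Sum>\<tau>=1..Suc s. \<gamma> \<tau> * (ys \<bullet> z \<tau>))"
      unfolding inner_sum_right by simp
    also have "\<dots> \<ge> 0"
    proof (rule sum_nonneg)
      fix x assume x: "x \<in> {1..Suc s}"
      have "\<gamma> x > 0" using gamma_pos x by auto
      moreover have "ys \<bullet> z x \<ge> 0" using that(2) x s by auto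
      ultimately show "\<gamma> x * (ys \<bullet> z x) \<ge> 0" by simp
    qed
    finally have "ys \<bullet> (\<Sum>\<tau>=1..Suc s. \<gamma> \<tau> *\<^sub>R z \<tau>) \<ge> 0" .
    thus ?thesis using ystep s S by simp
  qed
  have vpos: "ys \<bullet> vdir w \<ge> 0" if "ys \<bullet> w \<ge> 0" for w
    using that by (simp add: vdir_def)
  have proxP: "ys \<bullet> proxy c l A w bb \<ge> ys \<bullet> A" if "ys \<bullet> w \<ge> 0" "l A = 1" for A w bb
  proof -
    have v: "ys \<bullet> vdir w \<ge> 0" using vpos that by simp
    show ?thesis using that v unfolding proxy_def Let_def
      by (auto simp: inner_add_right intro!: mult_nonneg_nonneg)
  qed
  have proxN: "ys \<bullet> proxy c l A w bb \<le> ys \<bullet> A" if "ys \<bullet> w \<ge> 0" "l A = -1" for A w bb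
  proof -
    have v: "ys \<bullet> vdir w \<ge> 0" using vpos that by simp
    show ?thesis using that v unfolding proxy_def Let_def
      by (auto simp: inner_diff_right zero_le_divide_iff intro!: mult_nonneg_nonneg divide_nonneg_nonneg)
  qed
  have K: "(\<forall>\<tau>. 1 \<le> \<tau> \<and> \<tau> \<le> Suc n \<longrightarrow> ys \<bullet> z \<tau> \<ge> 0) \<and> (\<forall>x\<in>P n. ys \<bullet> x + bs \<ge> 0) \<and> (\<forall>x\<in>N n. ys \<bullet> x + bs \<le> 0)" for n
  proof (induction n)
    case 0
    have "\<forall>\<tau>. 1 \<le> \<tau> \<and> \<tau> \<le> Suc 0 \<longrightarrow> ys \<bullet> z \<tau> \<ge> 0" using z1pos by (auto simp: le_Suc_eq)
    moreover have "\<forall>x\<in>P 0. ys \<bullet> x + bs \<ge> 0" using P0 init_in posA by auto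
    moreover have "\<forall>x\<in>N 0. ys \<bullet> x + bs \<le> 0" using N0 init_in negA by auto
    ultimately show ?case by blast
  next
    case (Suc n)
    define t where "t = Suc n"
    have t1: "t \<ge> 1" by (simp add: t_def)
    have zt: "\<forall>\<tau>. 1 \<le> \<tau> \<and> \<tau> \<le> t \<longrightarrow> ys \<bullet> z \<tau> \<ge> 0" using Suc.IH by (simp add: t_def)
    have yt: "ys \<bullet> y t \<ge> 0" using yz[OF t1 zt] .
    have Ag: "Ag t \<in> AS" using agents t1 by simp
    have Pt: "\<forall>x\<in>P t. ys \<bullet> x + bs \<ge> 0"
    proof
      fix x assume x: "x \<in> P t"
      show "ys \<bullet> x + bs \<ge> 0"
      proof (cases "l (Ag t) = 1")
        case True
        hence "x = proxy c l (Ag t) (y t) (b t) \<or> x \<in> P n" using x Pstep t1 by (simp add: t_def)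
        thus ?thesis
        proof
          assume xe: "x = proxy c l (Ag t) (y t) (b t)"
          have "ys \<bullet> Ag t \<le> ys \<bullet> proxy c l (Ag t) (y t) (b t)" by (rule proxP[OF yt True])
          thus ?thesis unfolding xe using posA[OF Ag True] by linarith
        qed (use Suc.IH in auto)
      next
        case False
        hence "x \<in> P n" using x Pstep t1 by (simp add: t_def)
        thus ?thesis using Suc.IH by auto
      qed
    qed
    have Nt: "\<forall>x\<in>N t. ys \<bullet> x + bs \<le> 0"
    proof
      fix x assume x: "x \<in> N t"
      show "ys \<bullet> x + bs \<le> 0"
      proof (cases "l (Ag t) = 1")
        case False
        hence lm: "l (Ag t) = -1" using labels Ag by auto
        have "x = proxy c l (Ag t) (y t) (b t) \<or> x \<in> N n" using x Nstep t1 False by (simp add: t_def)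
        thus ?thesis
        proof
          assume xe: "x = proxy c l (Ag t) (y t) (b t)"
          have "ys \<bullet> proxy c l (Ag t) (y t) (b t) \<le> ys \<bullet> Ag t" by (rule proxN[OF yt lm])
          thus ?thesis unfolding xe using negA[OF Ag lm] by linarith
        qed (use Suc.IH in auto)
      next
        case True
        hence "x \<in> N n" using x Nstep t1 by (simp add: t_def)
        thus ?thesis using Suc.IH by auto
      qed
    qed
    have spm: "ys \<bullet> (sp t - sm t) \<ge> 0"
    proof -
      have "sp t \<in> P t" "sm t \<in> N t" using sp_def sm_def t1 by auto
      hence "ys \<bullet> sp t + bs \<ge> 0" "ys \<bullet> sm t + bs \<le> 0" using Pt Nt by auto
      thus ?thesis by (simp add: inner_diff_right)
    qed
    define w where "w = z t + \<gamma> t *\<^sub>R (sp t - sm t)"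
    have "ys \<bullet> w \<ge> 0"
    proof -
      have "\<gamma> t > 0" using gamma_pos t1 by auto
      moreover have "ys \<bullet> z t \<ge> 0" using zt t1 by auto
      ultimately show ?thesis using spm by (simp add: w_def inner_add_right)
    qed
    hence "ys \<bullet> z (Suc t) \<ge> 0"
      using zstep t1 by (auto simp: proj_ball w_def[symmetric])
    hence "\<forall>\<tau>. 1 \<le> \<tau> \<and> \<tau> \<le> Suc t \<longrightarrow> ys \<bullet> z \<tau> \<ge> 0" using zt by (auto simp: le_Suc_eq)
    thus ?case using Pt Nt by (simp add: t_def)
  qed
  show ?thesis
  proof (intro allI impI)
    fix t :: nat assume t: "t \<ge> 1"
    have "\<forall>\<tau>. 1 \<le> \<tau> \<and> \<tau> \<le> t \<longrightarrow> ys \<bullet> z \<tau> \<ge> 0" using K[of "t - 1"] t by simp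
    thus "ys \<bullet> vdir (y t) \<ge> 0" using yz t vpos by blast
  qed
qed

end
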